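(* For every $\varepsilon\in(0,1)$ there exist $\xi>0$ and $t_0$ such that the following holds for every set $W$ with $|W|=t\ge t_0$. Suppose that for each $3$-subset $R\subseteq W$ we are given a map $\sigma_R:R\to\{0,1\}$. Call a $5$-subset $L\subseteq W$ consistent if for all $3$-subsets $R,S\subseteq L$, $\sigma_R$ and $\sigma_S$ agree on $R\cap S$. If at least $(1-\xi)\binom t5$ of the $5$-subsets of $W$ are consistent, then there is $f:W\to\{0,1\}$ such that $\sigma_R=f|_R$ for all but at most $\varepsilon\binom t3$ of the $3$-subsets $R$ of $W$. *)

theory Defs
  imports Complex_Main
begin

text \<open>Maps to {0,1} are represented as bool-valued functions.\<close>
definition consistent5 :: "('a set \<Rightarrow> 'a \<Rightarrow> bool) \<Rightarrow> 'a set \<Rightarrow> bool" where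
  "consistent5 \<sigma> L \<longleftrightarrow>
     (\<forall>R S. R \<subseteq> L \<and> card R = 3 \<and> S \<subseteq> L \<and> card S = 3 \<longrightarrow>
        (\<forall>x \<in> R \<inter> S. \<sigma> R x = \<sigma> S x))"

end

theory Submission imports Defs begin

lemma minority_bound:
  fixes T :: "'b set" and p :: "'b \<Rightarrow> bool"
  assumes "finite T"
  shows "card {R\<in>T. p R \<noteq> (card {R\<in>T. \<not> p R} \<le> card {R\<in>T. p R})} * card T
         \<le> card {(R,S). R\<in>T \<and> S\<in>T \<and> p R \<noteq> p S}"
proof -
  define A where "A = {R\<in>T. p R}"
  define C where "C = {R\<in>T. \<not> p R}"
  have fA: "finite A" and fC: "finite C" using assms by (auto simp: A_def C_def)
  have cT: "card T = card A + card C"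
  proof -
    have "T = A \<union> C" "A \<inter> C = {}" by (auto simp: A_def C_def)
    then show ?thesis using fA fC card_Un_disjoint by metis
  qed
  have P: "{(R,S). R\<in>T \<and> S\<in>T \<and> p R \<noteq> p S} = A \<times> C \<union> C \<times> A"
    by (auto simp: A_def C_def)
  have cP: "card (A \<times> C \<union> C \<times> A) = 2 * card A * card C"
  proof -
    have "(A \<times> C) \<inter> (C \<times> A) = {}" by (auto simp: A_def C_def)
    then have "card (A \<times> C \<union> C \<times> A) = card (A \<times> C) + card (C \<times> A)"
      using fA fC by (simp add: card_Un_disjoint)
    then show ?thesis by (simp add: card_cartesian_product)
  qed
  show ?thesis
  proof (cases "card C \<le> card A")
    case True
    have "{R\<in>T. p R \<noteq> (card {R\<in>T. \<not> p R} \<le> card {R\<in>T. p R})} = C"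
      using True by (auto simp: A_def C_def)
    moreover have "card C * (card A + card C) \<le> 2 * card A * card C"
      using True by (simp add: algebra_simps mult_le_mono)
    ultimately show ?thesis using cT P cP by simp
  next
    case False
    have "{R\<in>T. p R \<noteq> (card {R\<in>T. \<not> p R} \<le> card {R\<in>T. p R})} = A"
      using False by (auto simp: A_def C_def)
    moreover have "card A * (card A + card C) \<le> 2 * card A * card C"
      using False by (simp add: algebra_simps mult_le_mono)
    ultimately show ?thesis using cT P cP by simp
  qed
qed

lemma triples_through:
  assumes "finite W" "x \<in> W"
  shows "card {R. R \<subseteq> W \<and> card R = 3 \<and> x \<in> R} = (card W - 1) choose 2"
proof -
  have "bij_betw (insert x) {S. S \<subseteq> W - {x} \<and> card S = 2} {R. R \<subseteq> W \<and> card R = 3 \<and> x \<in> R}"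
  proof (rule bij_betw_byWitness[where f'="\<lambda>R. R - {x}"])
    show "\<forall>a\<in>{S. S \<subseteq> W - {x} \<and> card S = 2}. insert x a - {x} = a" by auto
    show "\<forall>a'\<in>{R. R \<subseteq> W \<and> card R = 3 \<and> x \<in> R}. insert x (a' - {x}) = a'" by auto
    show "insert x ` {S. S \<subseteq> W - {x} \<and> card S = 2} \<subseteq> {R. R \<subseteq> W \<and> card R = 3 \<and> x \<in> R}"
    proof clarify
      fix S assume S: "S \<subseteq> W - {x}" "card S = 2"
      then have "finite S" using finite_subset[OF _ assms(1)] by blast
      moreover have "x \<notin> S" using S by auto
      ultimately show "insert x S \<subseteq> W \<and> card (insert x S) = 3 \<and> x \<in> insert x S" using S assms by auto
    qed
    show "(\<lambda>R. R - {x}) ` {R. R \<subseteq> W \<and> card R = 3 \<and> x \<in> R} \<subseteq> {S. S \<subseteq> W - {x} \<and> card S = 2}"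
      using assms by (auto dest: finite_subset[OF _ assms(1)])
  qed
  note bij_betw_same_card[OF this]
  then have bj: "card {R. R \<subseteq> W \<and> card R = 3 \<and> x \<in> R} = card {S. S \<subseteq> W - {x} \<and> card S = 2}"
    by (rule sym)
  also have "\<dots> = card (W - {x}) choose 2" using assms(1) by (rule n_subsets[OF finite_Diff])
  finally show ?thesis using assms by (metis card_Diff_singleton)
qed
lemma overlap_bound:
  assumes "finite W" "x \<in> W"
  shows "card {(R,T). R \<in> {R. R \<subseteq> W \<and> card R = 3 \<and> x \<in> R} \<and> T \<in> {R. R \<subseteq> W \<and> card R = 3 \<and> x \<in> R} \<and> R \<inter> T \<noteq> {x}}
     \<le> card {R. R \<subseteq> W \<and> card R = 3 \<and> x \<in> R} * (2 * card W)"
proof -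
  define Tx where "Tx = {R. R \<subseteq> W \<and> card R = 3 \<and> x \<in> R}"
  have fTx: "finite Tx"
    by (rule finite_subset[of _ "Pow W"]) (use assms(1) in \<open>auto simp: Tx_def\<close>)
  define B where "B = (\<lambda>R. (\<lambda>(y,z). {x,y,z}) ` ((R - {x}) \<times> W))"
  have sub1: "T \<in> B R" if R: "R \<in> Tx" and T: "T \<in> Tx" and ne: "R \<inter> T \<noteq> {x}" for R T
  proof -
    have "x \<in> R \<inter> T" using R T by (auto simp: Tx_def)
    then obtain y where y: "y \<in> R" "y \<in> T" "y \<noteq> x" using ne by blast
    have TW: "T \<subseteq> W" using T by (simp add: Tx_def)
    then have fT: "finite T" using assms(1) by (rule finite_subset)
    have xT: "x \<in> T" using T by (auto simp: Tx_def)
    have sxy: "{x,y} \<subseteq> T" using y xT by auto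
    have c2: "card {x,y} = 2" using y by simp
    have cD: "card (T - {x,y}) = card T - card {x,y}" by (rule card_Diff_subset) (simp, fact sxy)
    have cT: "card T = 3" using T by (simp add: Tx_def)
    have "card (T - {x,y}) = Suc 0" using cD cT c2 by presburger
    then have "\<exists>z. T - {x,y} = {z}" by (simp only: card_1_singleton_iff)
    then obtain z where z: "T - {x,y} = {z}" by (elim exE)
    have TT: "T = {x,y,z}" using z xT y by auto
    have "z \<in> T" using z by blast
    then have "z \<in> W" using TW by blast
    then have mem: "(y,z) \<in> (R - {x}) \<times> W" using y by simp
    have "T = (\<lambda>(y,z). {x,y,z}) (y,z)" using TT by simp
    then show "T \<in> B R" unfolding B_def using mem by (rule image_eqI)
  qed
  have sub: "{(R,T). R \<in> Tx \<and> T \<in> Tx \<and> R \<inter> T \<noteq> {x}} \<subseteq> Sigma Tx B"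
    using sub1 by blast
  have fB: "\<forall>R\<in>Tx. finite (B R)"
  proof
    fix R assume "R \<in> Tx"
    then have "R \<subseteq> W" by (simp add: Tx_def)
    then have "finite R" using assms(1) by (rule finite_subset)
    then show "finite (B R)" unfolding B_def using assms(1) by simp
  qed
  have "card {(R,T). R \<in> Tx \<and> T \<in> Tx \<and> R \<inter> T \<noteq> {x}} \<le> card (Sigma Tx B)"
    by (rule card_mono[OF finite_SigmaI[OF fTx] sub]) (use fB in blast)
  also have "\<dots> = (\<Sum>R\<in>Tx. card (B R))" using fTx fB by simp
  also have "\<dots> \<le> (\<Sum>R\<in>Tx. 2 * card W)"
  proof (rule sum_mono)
    fix R assume R: "R \<in> Tx"
    have "R \<subseteq> W" using R by (simp add: Tx_def)
    then have fR: "finite R" using assms(1) by (rule finite_subset)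
    have "card (R - {x}) = card R - 1" using R fR by (simp add: Tx_def card_Diff_singleton)
    then have "card (R - {x}) = 2" using R by (simp add: Tx_def)
    then have "card ((R - {x}) \<times> W) = 2 * card W" by (simp add: card_cartesian_product)
    moreover have "card (B R) \<le> card ((R - {x}) \<times> W)" unfolding B_def
      by (rule card_image_le) (use fR assms(1) in simp)
    ultimately show "card (B R) \<le> 2 * card W" by simp
  qed
  also have "\<dots> = card Tx * (2 * card W)" by simp
  finally show ?thesis unfolding Tx_def .
qed


lemma sumQ_bound:
  fixes \<sigma> :: "'a set \<Rightarrow> 'a \<Rightarrow> bool"
  assumes fW: "finite W"
  defines "Q \<equiv> \<lambda>x. {(R,S). R \<in> {R. R \<subseteq> W \<and> card R = 3 \<and> x \<in> R} \<and> S \<in> {R. R \<subseteq> W \<and> card R = 3 \<and> x \<in> R}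
                      \<and> \<sigma> R x \<noteq> \<sigma> S x \<and> R \<inter> S = {x}}"
  shows "(\<Sum>x\<in>W. card (Q x)) \<le> 5120 * card {L. L \<subseteq> W \<and> card L = 5 \<and> \<not> consistent5 \<sigma> L}"
proof -
  define Inc where "Inc = {L. L \<subseteq> W \<and> card L = 5 \<and> \<not> consistent5 \<sigma> L}"
  have fInc: "finite Inc" by (rule finite_subset[of _ "Pow W"]) (use fW in \<open>auto simp: Inc_def\<close>)
  have fQ: "\<forall>x\<in>W. finite (Q x)"
  proof
    fix x assume "x \<in> W"
    have "Q x \<subseteq> Pow W \<times> Pow W" by (auto simp: Q_def)
    then show "finite (Q x)" using fW by (meson finite_Pow_iff finite_SigmaI finite_subset)
  qed
  have sub: "(SIGMA x:W. Q x) \<subseteq> (\<Union>L\<in>Inc. L \<times> (Pow L \<times> Pow L))"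
  proof clarify
    fix x R S assume x: "x \<in> W" and RS: "(R,S) \<in> Q x"
    have R: "R \<subseteq> W" "card R = 3" "x \<in> R" and S: "S \<subseteq> W" "card S = 3" "x \<in> S"
      and dis: "\<sigma> R x \<noteq> \<sigma> S x" and int: "R \<inter> S = {x}" using RS by (auto simp: Q_def)
    have fR: "finite R" using R(1) fW by (rule finite_subset)
    have fS: "finite S" using S(1) fW by (rule finite_subset)
    have "card (R \<union> S) + card (R \<inter> S) = card R + card S" using fR fS by (rule card_Un_Int[symmetric])
    then have c5: "card (R \<union> S) = 5" using R(2) S(2) int by simp
    have nc: "\<not> consistent5 \<sigma> (R \<union> S)"
      unfolding consistent5_def using R S dis by blast
    have "R \<union> S \<in> Inc" using c5 nc R(1) S(1) by (simp add: Inc_def)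
    moreover have "(x, R, S) \<in> (R \<union> S) \<times> (Pow (R \<union> S) \<times> Pow (R \<union> S))" using R by auto
    ultimately show "(x, R, S) \<in> (\<Union>L\<in>Inc. L \<times> (Pow L \<times> Pow L))" by blast
  qed
  have "(\<Sum>x\<in>W. card (Q x)) = card (SIGMA x:W. Q x)" using fW fQ by simp
  also have "\<dots> \<le> card (\<Union>L\<in>Inc. L \<times> (Pow L \<times> Pow L))"
  proof (rule card_mono[OF _ sub])
    show "finite (\<Union>L\<in>Inc. L \<times> (Pow L \<times> Pow L))"
    proof (rule finite_UN_I[OF fInc])
      fix L assume "L \<in> Inc"
      then have "finite L" using fW by (auto simp: Inc_def intro: finite_subset)
      then show "finite (L \<times> (Pow L \<times> Pow L))" by simp
    qed
  qed
  also have "\<dots> \<le> (\<Sum>L\<in>Inc. card (L \<times> (Pow L \<times> Pow L)))" by (rule card_UN_le[OF fInc])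
  also have "\<dots> = (\<Sum>L\<in>Inc. 5120)"
  proof (rule sum.cong[OF refl])
    fix L assume L: "L \<in> Inc"
    then have cL: "card L = 5" by (simp add: Inc_def)
    then have "finite L" by (metis card.infinite zero_neq_numeral)
    then have "card (Pow L) = 32" using cL by (simp add: card_Pow)
    then show "card (L \<times> (Pow L \<times> Pow L)) = 5120" using cL by (simp add: card_cartesian_product)
  qed
  also have "\<dots> = 5120 * card Inc" by simp
  finally show ?thesis by (simp add: Inc_def)
qed


lemma core:
  fixes \<sigma> :: "'a set \<Rightarrow> 'a \<Rightarrow> bool"
  assumes fW: "finite W"
  shows "\<exists>f. ((card W - 1) choose 2) * card {R. R \<subseteq> W \<and> card R = 3 \<and> \<not> (\<forall>x\<in>R. \<sigma> R x = f x)}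
            \<le> 5120 * card {L. L \<subseteq> W \<and> card L = 5 \<and> \<not> consistent5 \<sigma> L}
              + 2 * card W * card W * ((card W - 1) choose 2)"
proof -
  define N where "N = (card W - 1) choose 2"
  define t where "t = card W"
  define Tx where "Tx = (\<lambda>x. {R. R \<subseteq> W \<and> card R = 3 \<and> x \<in> R})"
  define f where "f = (\<lambda>x. card {R\<in>Tx x. \<not> \<sigma> R x} \<le> card {R\<in>Tx x. \<sigma> R x})"
  define M where "M = (\<lambda>x. {R\<in>Tx x. \<sigma> R x \<noteq> f x})"
  define P where "P = (\<lambda>x. {(R,S). R\<in>Tx x \<and> S\<in>Tx x \<and> \<sigma> R x \<noteq> \<sigma> S x})"
  define Q where "Q = (\<lambda>x. {(R,S). R \<in> {R. R \<subseteq> W \<and> card R = 3 \<and> x \<in> R} \<and> S \<in> {R. R \<subseteq> W \<and> card R = 3 \<and> x \<in> R}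
                      \<and> \<sigma> R x \<noteq> \<sigma> S x \<and> R \<inter> S = {x}})"
  define Ov where "Ov = (\<lambda>x. {(R,T). R \<in> {R. R \<subseteq> W \<and> card R = 3 \<and> x \<in> R} \<and> T \<in> {R. R \<subseteq> W \<and> card R = 3 \<and> x \<in> R} \<and> R \<inter> T \<noteq> {x}})"
  define bad where "bad = {R. R \<subseteq> W \<and> card R = 3 \<and> \<not> (\<forall>x\<in>R. \<sigma> R x = f x)}"
  have fTx: "finite (Tx x)" for x
    by (rule finite_subset[of _ "Pow W"]) (use fW in \<open>auto simp: Tx_def\<close>)
  have fTT: "finite (Tx x \<times> Tx x)" for x using fTx by simp
  have cTx: "card (Tx x) = N" if "x \<in> W" for x
    unfolding Tx_def N_def by (rule triples_through[OF fW that])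
  have step1: "card bad \<le> (\<Sum>x\<in>W. card (M x))"
  proof -
    have "bad \<subseteq> (\<Union>x\<in>W. M x)" by (auto simp: bad_def M_def Tx_def)
    moreover have "finite (\<Union>x\<in>W. M x)" using fW fTx by (auto simp: M_def)
    ultimately have "card bad \<le> card (\<Union>x\<in>W. M x)" by (rule card_mono[rotated])
    also have "\<dots> \<le> (\<Sum>x\<in>W. card (M x))" by (rule card_UN_le[OF fW])
    finally show ?thesis .
  qed
  have step2: "card (M x) * N \<le> card (Q x) + N * (2 * t)" if x: "x \<in> W" for x
  proof -
    have "card (M x) * N \<le> card (P x)"
      using minority_bound[OF fTx[of x], of "\<lambda>R. \<sigma> R x"] cTx[OF x]
      unfolding M_def P_def f_def by simp
    also have "\<dots> \<le> card (Q x \<union> Ov x)"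
    proof (rule card_mono)
      show "finite (Q x \<union> Ov x)"
        by (rule finite_subset[OF _ fTT[of x]]) (auto simp: Q_def Ov_def Tx_def)
      show "P x \<subseteq> Q x \<union> Ov x" by (auto simp: P_def Q_def Ov_def Tx_def)
    qed
    also have "\<dots> \<le> card (Q x) + card (Ov x)" by (rule card_Un_le)
    also have "card (Ov x) \<le> N * (2 * t)"
      using overlap_bound[OF fW x] cTx[OF x] unfolding Ov_def Tx_def t_def by simp
    finally show ?thesis by simp
  qed
  have "N * card bad \<le> N * (\<Sum>x\<in>W. card (M x))" using step1 by simp
  also have "\<dots> = (\<Sum>x\<in>W. card (M x) * N)" by (simp add: sum_distrib_left mult.commute)
  also have "\<dots> \<le> (\<Sum>x\<in>W. card (Q x) + N * (2 * t))" by (rule sum_mono) (rule step2)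
  also have "\<dots> = (\<Sum>x\<in>W. card (Q x)) + t * (N * (2 * t))" by (simp add: sum.distrib t_def)
  also have "\<dots> \<le> 5120 * card {L. L \<subseteq> W \<and> card L = 5 \<and> \<not> consistent5 \<sigma> L} + t * (N * (2 * t))"
    using sumQ_bound[OF fW, of \<sigma>] unfolding Q_def by simp
  finally show ?thesis unfolding N_def t_def bad_def by (intro exI[of _ f]) (simp add: algebra_simps)
qed


lemma closed_forms:
  assumes "t \<ge> 5"
  shows "real (t choose 5) * 120 = real t * (real t - 1) * (real t - 2) * (real t - 3) * (real t - 4)"
    and "real ((t - 1) choose 2) * 2 = (real t - 1) * (real t - 2)"
    and "real (t choose 3) * 6 = real t * (real t - 1) * (real t - 2)"
proof -
  obtain m where m: "t = m + 5" using assms by (metis add.commute le_Suc_ex)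
  have f5: "fact (m+5) = (real m+5)*(m+4)*(m+3)*(m+2)*(m+1)* fact m"
  proof -
    have "m+5 = Suc(Suc(Suc(Suc(Suc m))))" by simp
    then show ?thesis by (simp only: fact_Suc) (simp add: algebra_simps)
  qed
  have f4: "fact (m+4) = (real m+4)*(m+3)*(m+2)*(m+1)* fact m"
  proof -
    have "m+4 = Suc(Suc(Suc(Suc m)))" by simp
    then show ?thesis by (simp only: fact_Suc) (simp add: algebra_simps)
  qed
  have f2: "fact (m+2) = (real m+2)*(m+1)* fact m"
  proof -
    have "m+2 = Suc(Suc m)" by simp
    then show ?thesis by (simp only: fact_Suc) (simp add: algebra_simps)
  qed
  have f3: "fact (m+3) = (real m+3)*(m+2)*(m+1)* fact m"
  proof -
    have "m+3 = Suc(Suc(Suc m))" by simp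
    then show ?thesis by (simp only: fact_Suc) (simp add: algebra_simps)
  qed
  have rt: "real t = real m + 5" using m by simp
  have e5: "real ((m+5) choose 5) = (real m+5)*(m+4)*(m+3)*(m+2)*(m+1)/120"
    by (simp add: binomial_fact fact_numeral f5)
  then show "real (t choose 5) * 120 = real t * (real t - 1) * (real t - 2) * (real t - 3) * (real t - 4)"
    unfolding rt using m by (simp add: algebra_simps)
  have e2: "real ((m+4) choose 2) = (real m+4)*(m+3)/2"
    by (simp add: binomial_fact fact_numeral f4 f2)
  moreover have "t - 1 = m + 4" using m by simp
  ultimately show "real ((t - 1) choose 2) * 2 = (real t - 1) * (real t - 2)"
    unfolding rt by (simp add: algebra_simps)
  have e3: "real ((m+5) choose 3) = (real m+5)*(m+4)*(m+3)/6"
    by (simp add: binomial_fact fact_numeral f5 f2)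
  then show "real (t choose 3) * 6 = real t * (real t - 1) * (real t - 2)"
    unfolding rt using m by (simp add: algebra_simps)
qed


lemma final_arith:
  fixes s e B I C5 N C3 :: real
  assumes e: "0 < e" "e < 1" and s: "s \<ge> 100 / e + 10"
    and C5: "C5 * 120 = s * (s - 1) * (s - 2) * (s - 3) * (s - 4)"
    and N: "N * 2 = (s - 1) * (s - 2)"
    and C3: "C3 * 6 = s * (s - 1) * (s - 2)"
    and I: "I \<le> e / 10000 * C5"
    and main: "N * B \<le> 5120 * I + 2 * s * s * N"
  shows "B \<le> e * C3"
proof -
  have s10: "s \<ge> 10" using s e by (smt (verit) divide_pos_pos)
  have es: "e * s \<ge> 100"
  proof -
    have "e * s \<ge> e * (100 / e)" using s e by (intro mult_left_mono) auto
    then show ?thesis using e by simp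
  qed
  define K where "K = (s - 1) * (s - 2)"
  have Kpos: "K > 0" using s10 unfolding K_def by (intro mult_pos_pos) auto
  have Npos: "N > 0" using N Kpos K_def by linarith
  have KN: "N = K / 2" using N K_def by simp
  have Kexp: "K = s * s - 3 * s + 2" unfolding K_def by (simp add: algebra_simps)
  have "s * (s - 6) \<ge> 0" using s10 by (intro mult_nonneg_nonneg) auto
  then have K2: "K \<ge> s * s / 2" unfolding Kexp by (simp add: algebra_simps)
  have "s * (s - 1) * (s - 2) * (s - 3) * (s - 4) = ((s - 1) * (s - 2)) * (s * (s - 3) * (s - 4))"
    by algebra
  then have "C5 * 120 = (N * 2) * (s * (s - 3) * (s - 4))" using C5 N by simp
  then have C5': "C5 = N * (s * (s - 3) * (s - 4)) / 60" by (simp add: field_simps)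
  have "(s - 3) * (s - 4) = s * s - 7 * s + 12" by (simp add: algebra_simps)
  then have "(s - 3) * (s - 4) \<le> K" unfolding Kexp using s10 by linarith
  then have "s * ((s - 3) * (s - 4)) \<le> s * K" using s10 by (intro mult_left_mono) auto
  then have t1: "s * (s - 3) * (s - 4) \<le> s * K" by (simp add: mult.assoc)
  have "N * B \<le> 5120 * (e / 10000 * C5) + 2 * s * s * N" using main I by linarith
  also have "\<dots> = N * (0.512 * e * (s * (s - 3) * (s - 4)) / 60 + 2 * s * s)"
  proof -
    define X where "X = s * (s - 3) * (s - 4)"
    show ?thesis unfolding C5' X_def[symmetric] by (simp add: field_simps)
  qed
  finally have B1: "B \<le> 0.512 * e * (s * (s - 3) * (s - 4)) / 60 + 2 * s * s"
    using Npos by (simp add: mult_le_cancel_left_pos)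
  have a1: "0.512 * e * (s * (s - 3) * (s - 4)) / 60 \<le> e * (s * K) / 12"
  proof -
    have "0.512 * e * (s * (s - 3) * (s - 4)) / 60 \<le> 0.512 * e * (s * K) / 60"
      using t1 e by (intro divide_right_mono mult_left_mono) auto
    also have "\<dots> \<le> e * (s * K) / 12"
      using e Kpos s10 by (simp add: field_simps)
    finally show ?thesis .
  qed
  have a2: "2 * s * s \<le> e * (s * K) / 12"
  proof -
    have "100 * s / 2 \<le> (e * s) * s / 2" using es s10 by (intro divide_right_mono mult_right_mono) auto
    also have "\<dots> = e * (s * s / 2)" by simp
    also have "\<dots> \<le> e * K" using K2 e by (intro mult_left_mono) auto
    finally have "e * K \<ge> 50 * s" by simp
    then have "s * (e * K) \<ge> s * (50 * s)" using s10 by (intro mult_left_mono) auto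
    moreover have "0 \<le> s * s" by simp
    moreover have "s * (50 * s) = 50 * (s * s)" "s * (e * K) = e * (s * K)" "2 * s * s * 12 = 24 * (s * s)"
      by (simp_all add: algebra_simps)
    ultimately have "2 * s * s * 12 \<le> e * (s * K)" by linarith
    then show ?thesis by simp
  qed
  have "B \<le> e * (s * K) / 6" using B1 a1 a2 by linarith
  also have "\<dots> = e * C3"
  proof -
    have "s * K = C3 * 6" using C3 unfolding K_def by (simp add: mult.assoc)
    then show ?thesis by simp
  qed
  finally show ?thesis .
qed


theorem lemma6:
  fixes \<epsilon> :: real
  assumes "0 < \<epsilon>" and "\<epsilon> < 1"
  shows "\<exists>\<xi>::real. \<xi> > 0 \<and> (\<exists>t0::nat. \<forall>(W::nat set) (\<sigma>::nat set \<Rightarrow> nat \<Rightarrow> bool).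
           finite W \<and> card W \<ge> t0 \<and>
           real (card {L. L \<subseteq> W \<and> card L = 5 \<and> consistent5 \<sigma> L})
             \<ge> (1 - \<xi>) * real (card W choose 5)
           \<longrightarrow> (\<exists>f::nat \<Rightarrow> bool.
                 real (card {R. R \<subseteq> W \<and> card R = 3 \<and> \<not> (\<forall>x\<in>R. \<sigma> R x = f x)})
                   \<le> \<epsilon> * real (card W choose 3)))"
proof -
  define \<xi> where "\<xi> = \<epsilon> / 10000"
  define t0 where "t0 = nat \<lceil>100 / \<epsilon>\<rceil> + 10"
  have xi: "\<xi> > 0" using assms by (simp add: \<xi>_def)
  have "\<exists>t0::nat. \<forall>(W::nat set) (\<sigma>::nat set \<Rightarrow> nat \<Rightarrow> bool).
           finite W \<and> card W \<ge> t0 \<and>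
           real (card {L. L \<subseteq> W \<and> card L = 5 \<and> consistent5 \<sigma> L})
             \<ge> (1 - \<xi>) * real (card W choose 5)
           \<longrightarrow> (\<exists>f::nat \<Rightarrow> bool.
                 real (card {R. R \<subseteq> W \<and> card R = 3 \<and> \<not> (\<forall>x\<in>R. \<sigma> R x = f x)})
                   \<le> \<epsilon> * real (card W choose 3))"
  proof (rule exI[of _ t0], intro allI impI, elim conjE)
    fix W :: "nat set" and \<sigma> :: "nat set \<Rightarrow> nat \<Rightarrow> bool"
    assume fW: "finite W" and cW: "t0 \<le> card W"
      and H: "(1 - \<xi>) * real (card W choose 5) \<le> real (card {L. L \<subseteq> W \<and> card L = 5 \<and> consistent5 \<sigma> L})"
    define t where "t = card W"
    define Cons where "Cons = {L. L \<subseteq> W \<and> card L = 5 \<and> consistent5 \<sigma> L}"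
    define Inc where "Inc = {L. L \<subseteq> W \<and> card L = 5 \<and> \<not> consistent5 \<sigma> L}"
    obtain f where hf: "((t - 1) choose 2) * card {R. R \<subseteq> W \<and> card R = 3 \<and> \<not> (\<forall>x\<in>R. \<sigma> R x = f x)}
            \<le> 5120 * card Inc + 2 * t * t * ((t - 1) choose 2)"
      using core[OF fW, of \<sigma>] unfolding t_def Inc_def by blast
    have t10: "t \<ge> 10" using cW by (simp add: t0_def t_def)
    have st: "real t \<ge> 100 / \<epsilon> + 10"
    proof -
      have "100 / \<epsilon> \<le> real (nat \<lceil>100 / \<epsilon>\<rceil>)" by linarith
      then show ?thesis using cW by (simp add: t0_def t_def)
    qed
    have cf: "real (t choose 5) * 120 = real t * (real t - 1) * (real t - 2) * (real t - 3) * (real t - 4)"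
      "real ((t - 1) choose 2) * 2 = (real t - 1) * (real t - 2)"
      "real (t choose 3) * 6 = real t * (real t - 1) * (real t - 2)"
      using closed_forms[of t] t10 by auto
    have fCI: "finite Cons" "finite Inc"
      by (rule finite_subset[of _ "Pow W"], use fW in \<open>auto simp: Cons_def Inc_def\<close>)+
    have "card (Cons \<union> Inc) = card Cons + card Inc"
      by (rule card_Un_disjoint[OF fCI]) (auto simp: Cons_def Inc_def)
    moreover have "Cons \<union> Inc = {L. L \<subseteq> W \<and> card L = 5}" by (auto simp: Cons_def Inc_def)
    moreover have "card {L. L \<subseteq> W \<and> card L = 5} = t choose 5" unfolding t_def by (rule n_subsets[OF fW])
    ultimately have sumCI: "card Cons + card Inc = t choose 5" by simp
    have I: "real (card Inc) \<le> \<epsilon> / 10000 * real (t choose 5)"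
    proof -
      have "real (card Cons) + real (card Inc) = real (t choose 5)" using sumCI by (metis of_nat_add)
      moreover have "(1 - \<xi>) * real (t choose 5) \<le> real (card Cons)" using H by (simp add: Cons_def t_def)
      ultimately show ?thesis by (simp add: \<xi>_def algebra_simps)
    qed
    have main: "real ((t - 1) choose 2) * real (card {R. R \<subseteq> W \<and> card R = 3 \<and> \<not> (\<forall>x\<in>R. \<sigma> R x = f x)})
        \<le> 5120 * real (card Inc) + 2 * real t * real t * real ((t - 1) choose 2)"
    proof -
      have "real (((t - 1) choose 2) * card {R. R \<subseteq> W \<and> card R = 3 \<and> \<not> (\<forall>x\<in>R. \<sigma> R x = f x)})
            \<le> real (5120 * card Inc + 2 * t * t * ((t - 1) choose 2))"
        using hf by (rule of_nat_mono)
      then show ?thesis by simp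
    qed
    have "real (card {R. R \<subseteq> W \<and> card R = 3 \<and> \<not> (\<forall>x\<in>R. \<sigma> R x = f x)}) \<le> \<epsilon> * real (t choose 3)"
      by (rule final_arith[OF assms st cf(1) cf(2) cf(3) I main])
    then show "\<exists>f. real (card {R. R \<subseteq> W \<and> card R = 3 \<and> \<not> (\<forall>x\<in>R. \<sigma> R x = f x)})
                   \<le> \<epsilon> * real (card W choose 3)" unfolding t_def by blast
  qed
  then show ?thesis using xi by blast
qed

end
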